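(* Let $p>2$ and suppose the Drift Assumption, the Unbiased Noise Assumption, the $p$-th Moment Noise Assumption and the Lipschitz Assumption hold. Let $u_k=\sqrt{\Phi(x_k-x^\star)}$ and, for a fixed $D>0$, let $$z_k=\max\big(D,\min(2D,u_k)\big)-D\in[0,D].$$ Then there exist constants $\bar\alpha_D>0$ and $b_4>0$ (depending on $D$ but not on $k$) such that for every $k$ with $\alpha_k\le\bar\alpha_D$, $$\mathbb{E}[z_{k+1}^p\mid\mathcal F_k]\le z_k^p+b_4\alpha_k^p\quad\text{a.s.}$$
   Context: Let $\|\cdot\|$ denote the Euclidean norm on $\mathbb{R}^d$ and $\langle\cdot,\cdot\rangle$ the Euclidean inner product. Let $H:\mathbb{R}^d\to\mathbb{R}^d$ and consider the stochastic approximation iteration $x_{k+1}=x_k+\alpha_k\big(H(x_k)-x_k+w_k\big)$, $k\ge 0$, where $x_0$ is an initial point, $(\alpha_k)_{k\ge0}$ are positive step sizes and $(w_k)_{k\ge0}$ are random vectors in $\mathbb{R}^d$ defined on a common probability space. Let $\mathcal F_k=\sigma(x_0,x_1,\dots,x_k)$. Drift Assumption: there is $x^\star\in\mathbb{R}^d$ with $H(x^\star)=x^\star$, a differentiable function $\Phi:\mathbb{R}^d\to[0,\infty)$ and constants $\eta,c_1,c_2,L_2>0$ such that (i) $\langle\nabla\Phi(x-x^\star),H(x)-x\rangle\le-\eta\,\Phi(x-x^\star)$ for all $x\in\mathbb{R}^d$; (ii) $\Phi(y)\le\Phi(x)+\langle\nabla\Phi(x),y-x\rangle+\frac{L_2}{2}\|y-x\|^2$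 for all $x,y\in\mathbb{R}^d$; (iii) $c_1\|x-x^\star\|^2\le\Phi(x-x^\star)\le c_2\|x-x^\star\|^2$ for all $x\in\mathbb{R}^d$. Unbiased Noise Assumption: each $w_k$ is integrable and $\mathbb{E}[w_k\mid\mathcal F_k]=0$ almost surely for all $k\ge0$. $p$-th Moment Noise Assumption (for a given $p>1$): there are constants $A_p>0$, $B_p\ge0$ such that $\mathbb{E}[\|w_k\|^p\mid\mathcal F_k]\le A_p+B_p\|x_k-x^\star\|^p$ almost surely for all $k\ge 0$. Lipschitz Assumption: there is $C>0$ with $\|H(x)-H(y)\|\le C\|x-y\|$ for all $x,y\in\mathbb{R}^d$. *)

theory Defs
  imports "HOL-Probability.Probability"
begin

definition nat_filtration :: "'b measure \<Rightarrow> (nat \<Rightarrow> 'b \<Rightarrow> 'a::topological_space) \<Rightarrow> nat \<Rightarrow> 'b measure" where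
  "nat_filtration M x k =
     sigma (space M) {x i -` A \<inter> space M | i A. i \<le> k \<and> A \<in> sets borel}"

definition clipz :: "real \<Rightarrow> real \<Rightarrow> real" where
  "clipz D u = max D (min (2 * D) u) - D"

end

theory Submission
  imports Defs
begin

lemma tangent_powr:
  fixes q c x :: real
  assumes q: "1 \<le> q" and c: "0 \<le> c" and x: "0 \<le> x"
  shows "c powr q + q * c powr (q-1) * (x - c) \<le> x powr q"
proof (cases "c = 0")
  case True then show ?thesis using x by simp
next
  case cpos: False
  then have cp: "c > 0" using c by simp
  show ?thesis
  proof (cases "x = 0")
    case True
    have e: "c powr q = c powr (q-1) * c" using cp by (simp add: powr_diff)
    have X: "0 \<le> c powr (q-1) * c" using cp by simp
    have "1 * (c powr (q-1) * c) \<le> q * (c powr (q-1) * c)" by (rule mult_right_mono[OF q X])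
    moreover have "q * c powr (q-1) * (x - c) = - (q * (c powr (q-1) * c))" using True by simp
    moreover have "x powr q = 0" using True by simp
    ultimately show ?thesis using e by linarith
  next
    case False
    have "q * c powr (q-1) * (x - c) \<le> x powr q - c powr q"
    proof (rule convex_on_imp_above_tangent[where A="{0<..}"])
      show "convex_on {0<..} (\<lambda>x. x powr q)" using powr_convex[OF q] .
      show "((\<lambda>x. x powr q) has_real_derivative q * c powr (q - 1)) (at c within {0<..})"
        by (rule has_field_derivative_at_within[OF has_real_derivative_powr[OF cp]])
      show "connected {0::real<..}" by simp
      show "c \<in> interior {0<..}" using cp by (simp add: interior_open)
      show "x \<in> {0<..}" using False x by simp
    qed
    then show ?thesis by linarith
  qed
qed


lemma sum_powr_le:
  fixes x y p :: real
  assumes "0 \<le> x" "0 \<le> y" "0 \<le> p"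
  shows "(x + y) powr p \<le> 2 powr p * (x powr p + y powr p)"
proof -
  have "(x + y) powr p \<le> (2 * max x y) powr p" using assms by (intro powr_mono2) auto
  also have "\<dots> = 2 powr p * max x y powr p" using assms by (simp add: powr_mult)
  also have "max x y powr p \<le> x powr p + y powr p"
    by (cases "x \<le> y") (simp_all add: max_def)
  finally show ?thesis by (simp add: mult_left_mono)
qed

lemma taylor_powr:
  fixes a h p :: real
  assumes a: "0 \<le> a" and p: "2 < p"
  shows "max 0 (a + h) powr p \<le> a powr p + p * a powr (p-1) * h
           + (p * (p-1) * 2 powr (p-2) + p) * (a powr (p-2) * h\<^sup>2 + \<bar>h\<bar> powr p)"
proof -
  define K0 where "K0 = p * (p-1) * 2 powr (p-2) + p"
  have ap1: "a powr (p-1) = a * a powr (p-2)"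
  proof (cases "a = 0")
    case False
    have "a powr (p-1) = a powr (1 + (p-2))" by simp
    also have "\<dots> = a * a powr (p-2)" using False a by (simp only: powr_add powr_one)
    finally show ?thesis .
  qed (use p in simp)
  have hp: "\<bar>h\<bar> powr (p-2) * h\<^sup>2 = \<bar>h\<bar> powr p"
  proof (cases "h = 0")
    case True then show ?thesis using p by simp
  next
    case False
    have e2: "\<bar>h\<bar> powr 2 = h\<^sup>2" using False by (simp add: powr_realpow[of _ 2, simplified])
    have "\<bar>h\<bar> powr (p-2) * h\<^sup>2 = \<bar>h\<bar> powr (p-2) * \<bar>h\<bar> powr 2" using e2 by simp
    also have "\<dots> = \<bar>h\<bar> powr (p - 2 + 2)" by (simp only: powr_add)
    finally show ?thesis by simp
  qed
  have K0ge: "K0 \<ge> p" unfolding K0_def using p by (simp add: mult_nonneg_nonneg)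
  have Aa: "0 \<le> a powr (p-2) * h\<^sup>2 + \<bar>h\<bar> powr p" by simp
  show ?thesis
  proof (cases "a + h < 0")
    case True
    have "a * a powr (p-2) * (-h) \<le> (-h) * a powr (p-2) * (-h)"
      using True a by (intro mult_right_mono mult_right_mono) auto
    then have "p * (a * a powr (p-2) * (-h)) \<le> p * ((-h) * a powr (p-2) * (-h))"
      using p by (intro mult_left_mono) auto
    then have "- (p * a powr (p-1) * h) \<le> p * (a powr (p-2) * h\<^sup>2)"
      using ap1 by (simp add: power2_eq_square algebra_simps)
    also have "\<dots> \<le> K0 * (a powr (p-2) * h\<^sup>2 + \<bar>h\<bar> powr p)"
      using K0ge p by (intro mult_mono) auto
    finally have "- (p * a powr (p-1) * h) \<le> K0 * (a powr (p-2) * h\<^sup>2 + \<bar>h\<bar> powr p)" .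
    moreover have "max 0 (a + h) powr p = 0" using True by simp
    moreover have "0 \<le> a powr p" by simp
    ultimately show ?thesis unfolding K0_def[symmetric] by linarith
  next
    case False
    define b where "b = a + h"
    have b: "0 \<le> b" using False b_def by simp
    have t1: "b powr p \<le> a powr p + p * b powr (p-1) * h"
      using tangent_powr[of p b a] p a b unfolding b_def by (simp add: algebra_simps)
    have key: "(b powr (p-1) - a powr (p-1)) * h \<le> (p-1) * max a b powr (p-2) * h\<^sup>2"
    proof (cases "h \<ge> 0")
      case True
      have "b powr (p-1) - a powr (p-1) \<le> (p-1) * b powr (p-2) * h"
        using tangent_powr[of "p-1" b a] p a b unfolding b_def by (simp add: algebra_simps)
      then have "(b powr (p-1) - a powr (p-1)) * h \<le> ((p-1) * b powr (p-2) * h) * h"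
        using True by (intro mult_right_mono) auto
      also have "\<dots> = (p-1) * b powr (p-2) * h\<^sup>2" by (simp add: power2_eq_square)
      also have "\<dots> \<le> (p-1) * max a b powr (p-2) * h\<^sup>2"
        using b p by (intro mult_right_mono mult_left_mono powr_mono2) auto
      finally show ?thesis .
    next
      case False
      have "a powr (p-1) + (p-1) * a powr (p-2) * h \<le> b powr (p-1)"
        using tangent_powr[of "p-1" a b] p a b unfolding b_def by (simp add: algebra_simps)
      then have "(p-1) * a powr (p-2) * h \<le> b powr (p-1) - a powr (p-1)" by linarith
      then have "(b powr (p-1) - a powr (p-1)) * h \<le> ((p-1) * a powr (p-2) * h) * h"
        by (rule mult_right_mono_neg) (use False in auto)
      also have "\<dots> = (p-1) * a powr (p-2) * h\<^sup>2" by (simp add: power2_eq_square)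
      also have "\<dots> \<le> (p-1) * max a b powr (p-2) * h\<^sup>2"
        using a p by (intro mult_right_mono mult_left_mono powr_mono2) auto
      finally show ?thesis .
    qed
    have mx: "max a b powr (p-2) \<le> 2 powr (p-2) * (a powr (p-2) + \<bar>h\<bar> powr (p-2))"
    proof -
      have "max a b \<le> a + \<bar>h\<bar>" unfolding b_def by auto
      then have "max a b powr (p-2) \<le> (a + \<bar>h\<bar>) powr (p-2)" using a b p by (intro powr_mono2) auto
      also have "\<dots> \<le> 2 powr (p-2) * (a powr (p-2) + \<bar>h\<bar> powr (p-2))"
        using a p by (intro sum_powr_le) auto
      finally show ?thesis .
    qed
    have "(p-1) * max a b powr (p-2) * h\<^sup>2 \<le> (p-1) * (2 powr (p-2) * (a powr (p-2) + \<bar>h\<bar> powr (p-2))) * h\<^sup>2"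
      using mx p by (intro mult_right_mono mult_left_mono) auto
    also have "\<dots> = (p-1) * 2 powr (p-2) * (a powr (p-2) * h\<^sup>2 + \<bar>h\<bar> powr (p-2) * h\<^sup>2)"
      by (simp add: algebra_simps)
    also have "\<dots> = (p-1) * 2 powr (p-2) * (a powr (p-2) * h\<^sup>2 + \<bar>h\<bar> powr p)"
      by (simp only: hp)
    finally have k1: "(p-1) * max a b powr (p-2) * h\<^sup>2 \<le> (p-1) * 2 powr (p-2) * (a powr (p-2) * h\<^sup>2 + \<bar>h\<bar> powr p)" .
    have k2: "p * ((b powr (p-1) - a powr (p-1)) * h) \<le> p * ((p-1) * 2 powr (p-2) * (a powr (p-2) * h\<^sup>2 + \<bar>h\<bar> powr p))"
      using order_trans[OF key k1] p by (intro mult_left_mono) auto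
    have "max 0 (a + h) powr p = b powr p" using b b_def by simp
    also have "\<dots> \<le> a powr p + p * a powr (p-1) * h + p * ((b powr (p-1) - a powr (p-1)) * h)"
      using t1 by (simp add: algebra_simps)
    also have "\<dots> \<le> a powr p + p * a powr (p-1) * h + p * (p-1) * 2 powr (p-2) * (a powr (p-2) * h\<^sup>2 + \<bar>h\<bar> powr p)"
      using k2 by simp
    also have "\<dots> \<le> a powr p + p * a powr (p-1) * h + K0 * (a powr (p-2) * h\<^sup>2 + \<bar>h\<bar> powr p)"
      unfolding K0_def using Aa p by (intro add_left_mono mult_right_mono) auto
    finally show ?thesis unfolding K0_def .
  qed
qed

lemma clipz_nonneg: "0 \<le> clipz D u" unfolding clipz_def by simp
lemma clipz_leD: "0 \<le> D \<Longrightarrow> clipz D u \<le> D" unfolding clipz_def by simp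
lemma clipz_le: "clipz D u \<le> max 0 (u - D)" unfolding clipz_def by simp
lemma clipz_S: "u \<le> 2 * D \<Longrightarrow> clipz D u = max 0 (u - D)" unfolding clipz_def by simp
lemma clipz_big: "0 \<le> D \<Longrightarrow> 2 * D \<le> u \<Longrightarrow> clipz D u = D" unfolding clipz_def by simp
lemma clipz_small: "u \<le> D \<Longrightarrow> clipz D u = 0" unfolding clipz_def by simp

locale sa =
  fixes H :: "'a::euclidean_space \<Rightarrow> 'a"
    and xstar :: 'a
    and Phi :: "'a \<Rightarrow> real"
    and gradPhi :: "'a \<Rightarrow> 'a"
    and eta c1 c2 L2 p C D :: real
  assumes p_gt: "p > 2"
    and fix_pt: "H xstar = xstar"
    and Phi_nonneg: "\<And>x. Phi x \<ge> 0"
    and Phi_grad: "\<And>x. GDERIV Phi x :> gradPhi x"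
    and eta_pos: "eta > 0" and c1_pos: "c1 > 0" and c2_pos: "c2 > 0" and L2_pos: "L2 > 0"
    and drift: "\<And>x. inner (gradPhi (x - xstar)) (H x - x) \<le> - eta * Phi (x - xstar)"
    and smooth: "\<And>x y. Phi y \<le> Phi x + inner (gradPhi x) (y - x) + L2 / 2 * (norm (y - x))\<^sup>2"
    and sandwich: "\<And>x. c1 * (norm (x - xstar))\<^sup>2 \<le> Phi (x - xstar) \<and> Phi (x - xstar) \<le> c2 * (norm (x - xstar))\<^sup>2"
    and C_pos: "C > 0" and lipschitz: "\<And>x y. norm (H x - H y) \<le> C * norm (x - y)"
    and D_pos: "D > 0"
begin

lemma grad_bound: "(norm (gradPhi y))\<^sup>2 \<le> 2 * L2 * Phi y"
proof -
  define g where "g = gradPhi y"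
  have "Phi (y - (1/L2) *\<^sub>R g) \<le> Phi y + inner g (y - (1/L2) *\<^sub>R g - y) + L2/2 * (norm (y - (1/L2) *\<^sub>R g - y))\<^sup>2"
    using smooth[of "y - (1/L2) *\<^sub>R g" y] unfolding g_def by simp
  also have "\<dots> = Phi y - (norm g)\<^sup>2 / (2 * L2)"
    using L2_pos by (simp add: power2_eq_square field_simps inner_commute flip: power2_norm_eq_inner)
  finally have "0 \<le> Phi y - (norm g)\<^sup>2 / (2 * L2)" using Phi_nonneg[of "y - (1/L2) *\<^sub>R g"] by linarith
  then show ?thesis using L2_pos unfolding g_def by (simp add: field_simps)
qed

lemma d_bound: "norm (H x - x) \<le> (C + 1) * norm (x - xstar)"
proof -
  have "H x - x = (H x - H xstar) - (x - xstar)" using fix_pt by simp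
  then have "norm (H x - x) \<le> norm (H x - H xstar) + norm (x - xstar)" by (metis norm_triangle_ineq4)
  also have "\<dots> \<le> C * norm (x - xstar) + norm (x - xstar)" using lipschitz[of x xstar] by simp
  finally show ?thesis by (simp add: algebra_simps)
qed

lemma norm_le_u: "sqrt c1 * norm (x - xstar) \<le> sqrt (Phi (x - xstar))"
proof -
  have "sqrt (c1 * (norm (x - xstar))\<^sup>2) \<le> sqrt (Phi (x - xstar))" using sandwich[of x] by simp
  then show ?thesis using c1_pos by (simp add: real_sqrt_mult)
qed

lemma u_le_norm: "sqrt (Phi (x - xstar)) \<le> sqrt c2 * norm (x - xstar)"
proof -
  have "sqrt (Phi (x - xstar)) \<le> sqrt (c2 * (norm (x - xstar))\<^sup>2)" using sandwich[of x] by simp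
  then show ?thesis using c2_pos by (simp add: real_sqrt_mult)
qed

lemma step_u:
  fixes x v :: 'a and \<alpha> :: real
  defines "u \<equiv> sqrt (Phi (x - xstar))"
  defines "g \<equiv> gradPhi (x - xstar)"
  defines "d \<equiv> H x - x"
  assumes u: "u > 0" and \<alpha>: "\<alpha> > 0"
  shows "sqrt (Phi (x + \<alpha> *\<^sub>R (d + v) - xstar)) \<le>
           u - \<alpha> * eta * u / 2 + \<alpha> * inner g v / (2 * u) + L2 * \<alpha>\<^sup>2 * (norm (d + v))\<^sup>2 / (4 * u)"
proof -
  define P where "P = Phi (x - xstar)"
  define P' where "P' = Phi (x + \<alpha> *\<^sub>R (d + v) - xstar)"
  have uP: "u\<^sup>2 = P" unfolding u_def P_def using Phi_nonneg by simp
  have "P' \<le> P + inner g ((x + \<alpha> *\<^sub>R (d + v) - xstar) - (x - xstar)) + L2/2 * (norm ((x + \<alpha> *\<^sub>R (d + v) - xstar) - (x - xstar)))\<^sup>2"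
    unfolding P'_def P_def g_def by (rule smooth)
  also have "(x + \<alpha> *\<^sub>R (d + v) - xstar) - (x - xstar) = \<alpha> *\<^sub>R (d + v)" by simp
  finally have P0: "P' \<le> P + inner g (\<alpha> *\<^sub>R (d + v)) + L2/2 * (norm (\<alpha> *\<^sub>R (d + v)))\<^sup>2" .
  have "inner g (\<alpha> *\<^sub>R (d + v)) = \<alpha> * inner g d + \<alpha> * inner g v" by (simp add: inner_add_right algebra_simps)
  moreover have "(norm (\<alpha> *\<^sub>R (d + v)))\<^sup>2 = \<alpha>\<^sup>2 * (norm (d + v))\<^sup>2" using \<alpha> by (simp add: power_mult_distrib)
  ultimately have P1: "P' \<le> P + \<alpha> * inner g d + \<alpha> * inner g v + L2/2 * \<alpha>\<^sup>2 * (norm (d + v))\<^sup>2"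
    using P0 by (simp add: algebra_simps)
  have "inner g d \<le> - eta * P" unfolding g_def d_def P_def by (rule drift)
  then have "\<alpha> * inner g d \<le> \<alpha> * (- eta * P)" using \<alpha> by (intro mult_left_mono) auto
  with P1 have P2: "P' \<le> P - \<alpha> * eta * P + \<alpha> * inner g v + L2/2 * \<alpha>\<^sup>2 * (norm (d + v))\<^sup>2" by simp
  have P'0: "P' \<ge> 0" unfolding P'_def by (rule Phi_nonneg)
  have "2 * u * sqrt P' \<le> P' + u\<^sup>2"
  proof -
    have "0 \<le> (sqrt P' - u)\<^sup>2" by simp
    then show ?thesis using P'0 by (simp add: power2_eq_square algebra_simps)
  qed
  then have "sqrt P' \<le> (P' + u\<^sup>2) / (2 * u)" using u by (simp add: field_simps)
  also have "\<dots> \<le> (2 * P - \<alpha> * eta * P + \<alpha> * inner g v + L2/2 * \<alpha>\<^sup>2 * (norm (d + v))\<^sup>2) / (2 * u)"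
    using P2 u uP by (intro divide_right_mono) auto
  also have "\<dots> = u - \<alpha> * eta * u / 2 + \<alpha> * inner g v / (2 * u) + L2 * \<alpha>\<^sup>2 * (norm (d + v))\<^sup>2 / (4 * u)"
    using u uP[symmetric] by (simp add: field_simps power2_eq_square)
  finally show ?thesis unfolding P'_def .
qed

end

context sa begin

definition "uu y = sqrt (Phi (y - xstar))"
definition "zz y = clipz D (uu y)"
definition "phi y = (if uu y \<le> 2 * D then p * zz y powr (p - 1) / (2 * uu y) else 0)"
definition "del = min D (D * sqrt c1 / (2 * sqrt c2 * (2 + C)))"
definition "rr = D / (2 * sqrt c2)"
definition "Dd = (C + 1) * (2 * D) / sqrt c1"
definition "cdr = p * eta * D / 2"
definition "K0 = p * (p - 1) * 2 powr (p - 2) + p"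
definition "K1 = eta * D + L2 * Dd\<^sup>2 / (2 * del)"
definition "K2 = sqrt (2 * L2) / 2 + L2 * rr / (2 * del)"
definition "G = p * D powr (p - 1) * sqrt (2 * L2) / 2"
definition "KK = K0 * 2 * (K1\<^sup>2 + K2\<^sup>2) + p * D * L2 * (2 * Dd\<^sup>2 + 2) / (4 * del)
   + K0 * 2 powr p * (K1 powr p + K2 powr p) + (D powr p + G * rr + cdr * D powr (p - 1)) / rr powr p"

lemma del_pos: "del > 0" unfolding del_def using D_pos c1_pos c2_pos C_pos by simp
lemma del_le: "del \<le> D" unfolding del_def by simp
lemma del_le2: "sqrt c2 * (2 + C) * del / sqrt c1 \<le> D / 2"
proof -
  have "del \<le> D * sqrt c1 / (2 * sqrt c2 * (2 + C))" unfolding del_def by simp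
  then have "sqrt c2 * (2 + C) * del \<le> sqrt c2 * (2 + C) * (D * sqrt c1 / (2 * sqrt c2 * (2 + C)))"
    using c2_pos C_pos by (intro mult_left_mono) auto
  also have "\<dots> = D * sqrt c1 / 2"
  proof -
    have gen: "\<And>s t X. s \<noteq> 0 \<Longrightarrow> t \<noteq> 0 \<Longrightarrow> s * t * (X / (2 * s * t)) = X / (2::real)"
      by (simp add: field_simps)
    have "sqrt c2 \<noteq> 0" "2 + C \<noteq> 0" using c2_pos C_pos by auto
    then show ?thesis using gen by blast
  qed
  finally show ?thesis using c1_pos by (simp add: field_simps)
qed
lemma rr_pos: "rr > 0" unfolding rr_def using D_pos c2_pos by simp
lemma rr_eq: "sqrt c2 * rr = D / 2" unfolding rr_def using c2_pos by simp
lemma cdr_pos: "cdr > 0" unfolding cdr_def using p_gt eta_pos D_pos by simp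
lemma K0_pos: "K0 > 0" unfolding K0_def using p_gt by (simp add: add_pos_nonneg)
lemma Dd_nonneg: "Dd \<ge> 0" unfolding Dd_def using C_pos D_pos c1_pos by simp
lemma K1_nonneg: "K1 \<ge> 0" unfolding K1_def using eta_pos D_pos L2_pos del_pos by simp
lemma K2_nonneg: "K2 \<ge> 0" unfolding K2_def using L2_pos rr_pos del_pos by simp
lemma G_nonneg: "G \<ge> 0" unfolding G_def using p_gt L2_pos by simp

lemma KK_ge: "KK * rr powr p \<ge> D powr p + G * rr + cdr * D powr (p - 1)"
proof -
  have a: "0 \<le> K0 * 2 * (K1\<^sup>2 + K2\<^sup>2) + p * D * L2 * (2 * Dd\<^sup>2 + 2) / (4 * del)
   + K0 * 2 powr p * (K1 powr p + K2 powr p)"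
    using K0_pos p_gt D_pos L2_pos del_pos by (intro add_nonneg_nonneg) auto
  have "KK \<ge> (D powr p + G * rr + cdr * D powr (p - 1)) / rr powr p" unfolding KK_def using a by linarith
  then show ?thesis using rr_pos by (simp add: field_simps)
qed

lemma KK_ge1: "KK \<ge> K0 * 2 * (K1\<^sup>2 + K2\<^sup>2) + p * D * L2 * (2 * Dd\<^sup>2 + 2) / (4 * del)"
proof -
  have "0 \<le> K0 * 2 powr p * (K1 powr p + K2 powr p) + (D powr p + G * rr + cdr * D powr (p - 1)) / rr powr p"
    using K0_pos G_nonneg rr_pos cdr_pos by (intro add_nonneg_nonneg) auto
  then show ?thesis unfolding KK_def by linarith
qed

lemma KK_ge2: "KK \<ge> K0 * 2 powr p * (K1 powr p + K2 powr p)"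
proof -
  have "0 \<le> K0 * 2 * (K1\<^sup>2 + K2\<^sup>2) + p * D * L2 * (2 * Dd\<^sup>2 + 2) / (4 * del)"
    using K0_pos p_gt D_pos L2_pos del_pos by (intro add_nonneg_nonneg) auto
  moreover have "0 \<le> (D powr p + G * rr + cdr * D powr (p - 1)) / rr powr p"
    using G_nonneg rr_pos cdr_pos by (intro divide_nonneg_pos add_nonneg_nonneg) auto
  ultimately show ?thesis unfolding KK_def by linarith
qed

lemma KK_pos: "KK > 0"
proof -
  have "D powr p > 0" using D_pos by simp
  then have "KK * rr powr p > 0" using KK_ge G_nonneg rr_pos cdr_pos D_pos
    by (smt (verit) mult_nonneg_nonneg powr_ge_zero)
  then show ?thesis using rr_pos by (simp add: zero_less_mult_iff)
qed

end

lemma sq_le_powr: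
  fixes x p :: real
  assumes "0 \<le> x" "2 \<le> p"
  shows "x\<^sup>2 \<le> 1 + x powr p"
proof (cases "x \<le> 1")
  case True
  then have "x\<^sup>2 \<le> 1" using assms by (simp add: power_le_one)
  then show ?thesis by (smt (verit) powr_ge_zero)
next
  case False
  then have "x\<^sup>2 = x powr 2" by (simp add: powr_realpow[of _ 2, simplified])
  also have "\<dots> \<le> x powr p" using False assms by (intro powr_mono) auto
  finally show ?thesis by simp
qed

lemma sq_sum_le: "(x + y)\<^sup>2 \<le> 2 * x\<^sup>2 + 2 * (y::real)\<^sup>2"
proof -
  have "0 \<le> (x - y)\<^sup>2" by simp
  then show ?thesis by (simp add: power2_eq_square algebra_simps)
qed

context sa begin

lemma u_nonneg: "uu y \<ge> 0" unfolding uu_def using Phi_nonneg by simp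

lemma main_pw:
  fixes y v :: 'a and \<alpha> :: real
  assumes \<alpha>0: "0 < \<alpha>" and \<alpha>1: "\<alpha> \<le> 1"
  shows "zz (y + \<alpha> *\<^sub>R (H y - y + v)) powr p \<le> zz y powr p + \<alpha> * phi y * inner (gradPhi (y - xstar)) v
     + (if uu y \<le> 2 * D then - cdr * \<alpha> * zz y powr (p - 1)
          + KK * (\<alpha>\<^sup>2 * zz y powr (p - 2) + \<alpha> powr p) * (1 + norm v powr p) else 0)"
proof -
  define u where "u = uu y"
  define a where "a = zz y"
  define y' where "y' = y + \<alpha> *\<^sub>R (H y - y + v)"
  define g where "g = gradPhi (y - xstar)"
  define d where "d = H y - y"
  define nv where "nv = norm v"
  have nv0: "nv \<ge> 0" unfolding nv_def by simp
  have u0: "u \<ge> 0" unfolding u_def by (rule u_nonneg)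
  have a0: "a \<ge> 0" unfolding a_def zz_def by (rule clipz_nonneg)
  have aD: "a \<le> D" unfolding a_def zz_def using D_pos by (intro clipz_leD) auto
  have z'0: "0 \<le> zz y'" unfolding zz_def by (rule clipz_nonneg)
  have z'D: "zz y' \<le> D" unfolding zz_def using D_pos by (intro clipz_leD) auto
  have LD: "zz y' powr p \<le> D powr p" using z'0 z'D p_gt by (intro powr_mono2) auto
  have nvp: "1 \<le> 1 + nv powr p" by simp
  show ?thesis
  proof (cases "u \<le> 2 * D")
    case False
    then have "a = D" unfolding a_def zz_def u_def using D_pos by (intro clipz_big) auto
    moreover have "phi y = 0" unfolding phi_def using False u_def by simp
    ultimately show ?thesis using LD False unfolding y'_def a_def u_def by simp
  next
    case S: True
    have aS: "a = max 0 (u - D)" unfolding a_def zz_def u_def using S u_def by (intro clipz_S) simp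
    have ne: "norm (y - xstar) \<le> u / sqrt c1"
      using norm_le_u[of y] c1_pos unfolding u_def uu_def by (simp add: field_simps)
    have ne2: "norm (y - xstar) \<le> 2 * D / sqrt c1"
      using ne S c1_pos by (smt (verit) divide_right_mono real_sqrt_gt_zero)
    have nd: "norm d \<le> Dd"
    proof -
      have "norm d \<le> (C + 1) * norm (y - xstar)" unfolding d_def by (rule d_bound)
      also have "\<dots> \<le> (C + 1) * (2 * D / sqrt c1)" using ne2 C_pos by (intro mult_left_mono) auto
      finally show ?thesis unfolding Dd_def by simp
    qed
    have ng: "norm g \<le> sqrt (2 * L2) * u"
    proof -
      have "(norm g)\<^sup>2 \<le> 2 * L2 * Phi (y - xstar)" unfolding g_def by (rule grad_bound)
      also have "Phi (y - xstar) = u\<^sup>2" unfolding u_def uu_def using Phi_nonneg by simp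
      finally have "sqrt ((norm g)\<^sup>2) \<le> sqrt (2 * L2 * u\<^sup>2)" by (rule real_sqrt_le_mono)
      then show ?thesis using u0 L2_pos by (simp add: real_sqrt_mult)
    qed
    have phi_eq: "phi y = p * a powr (p - 1) / (2 * u)" unfolding phi_def a_def u_def using S u_def by simp
    have apD: "a powr (p - 1) \<le> D powr (p - 1)" using a0 aD p_gt by (intro powr_mono2) auto
    have phig: "\<bar>phi y * inner g v\<bar> \<le> G * nv"
    proof (cases "u = 0")
      case True then show ?thesis using phi_eq G_nonneg nv0 by simp
    next
      case False
      then have up: "u > 0" using u0 by simp
      have "\<bar>phi y * inner g v\<bar> = p * a powr (p - 1) / (2 * u) * \<bar>inner g v\<bar>"
        using phi_eq p_gt up by (simp add: abs_mult)
      also have "\<dots> \<le> p * a powr (p - 1) / (2 * u) * (sqrt (2 * L2) * u * nv)"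
      proof -
        have "\<bar>inner g v\<bar> \<le> norm g * norm v" by (rule Cauchy_Schwarz_ineq2)
        also have "\<dots> \<le> sqrt (2 * L2) * u * nv" unfolding nv_def using ng by (intro mult_right_mono) auto
        finally show ?thesis using p_gt up by (intro mult_left_mono) auto
      qed
      also have "\<dots> = p * a powr (p - 1) * sqrt (2 * L2) * nv / 2" using up by (simp add: field_simps)
      also have "\<dots> \<le> p * D powr (p - 1) * sqrt (2 * L2) * nv / 2"
        using apD p_gt nv0 L2_pos by (intro divide_right_mono mult_right_mono mult_left_mono) auto
      finally show ?thesis unfolding G_def by (simp add: field_simps)
    qed
    define R where "R = a powr p + \<alpha> * phi y * inner g v + (- cdr * \<alpha> * a powr (p - 1)
          + KK * (\<alpha>\<^sup>2 * a powr (p - 2) + \<alpha> powr p) * (1 + nv powr p))"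
    have KKt_nonneg: "0 \<le> KK * (\<alpha>\<^sup>2 * a powr (p - 2) + \<alpha> powr p) * (1 + nv powr p)"
      using KK_pos by simp
    have main: "zz y' powr p \<le> R"
    proof (cases "\<alpha> * nv > rr")
      case big: True
      define t where "t = \<alpha> * nv / rr"
      have t1: "t > 1" unfolding t_def using big rr_pos by simp
      have tp1: "1 \<le> t powr p" using t1 p_gt by (intro ge_one_powr_ge_zero) auto
      have "t = t powr 1" using t1 by simp
      also have "\<dots> \<le> t powr p" using t1 p_gt by (intro powr_mono) auto
      finally have ttp: "t \<le> t powr p" .
      have anv: "\<alpha> * nv = rr * t" unfolding t_def using rr_pos by simp
      have e1: "\<alpha> * \<bar>phi y * inner g v\<bar> \<le> G * rr * t powr p"
      proof -
        have "\<alpha> * \<bar>phi y * inner g v\<bar> \<le> \<alpha> * (G * nv)" using phig \<alpha>0 by (intro mult_left_mono) auto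
        also have "\<dots> = G * (rr * t)" using anv by (simp add: algebra_simps)
        also have "\<dots> \<le> G * (rr * t powr p)" using G_nonneg rr_pos ttp by (intro mult_left_mono) auto
        finally show ?thesis by simp
      qed
      have e2: "cdr * \<alpha> * a powr (p - 1) \<le> cdr * D powr (p - 1) * t powr p"
      proof -
        have "cdr * \<alpha> * a powr (p - 1) \<le> cdr * 1 * D powr (p - 1)"
          using cdr_pos \<alpha>0 \<alpha>1 apD by (intro mult_mono) auto
        also have "\<dots> \<le> cdr * D powr (p - 1) * t powr p"
        proof -
          have "0 \<le> cdr * D powr (p - 1)" using cdr_pos by simp
          from mult_left_mono[OF tp1 this] show ?thesis by simp
        qed
        finally show ?thesis .
      qed
      have e3: "KK * rr powr p * t powr p \<le> KK * (\<alpha>\<^sup>2 * a powr (p - 2) + \<alpha> powr p) * (1 + nv powr p)"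
      proof -
        have "rr powr p * t powr p = (\<alpha> * nv) powr p" using anv rr_pos t1 by (simp add: powr_mult)
        also have "\<dots> = \<alpha> powr p * nv powr p" using \<alpha>0 nv0 by (simp add: powr_mult)
        also have "\<dots> \<le> (\<alpha>\<^sup>2 * a powr (p - 2) + \<alpha> powr p) * (1 + nv powr p)"
          by (simp add: algebra_simps)
        finally show ?thesis using KK_pos by (simp add: mult.assoc mult_left_mono)
      qed
      have "D powr p \<le> D powr p * t powr p" using tp1 D_pos by (simp add: mult_le_cancel_left1)
      also have "\<dots> \<le> (KK * rr powr p - G * rr - cdr * D powr (p - 1)) * t powr p"
        using KK_ge t1 by (intro mult_right_mono) auto
      also have "\<dots> \<le> R"
      proof -
        have "\<alpha> * (- \<bar>phi y * inner g v\<bar>) \<le> \<alpha> * (phi y * inner g v)"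
          using \<alpha>0 by (intro mult_left_mono) auto
        then have ab: "- (\<alpha> * \<bar>phi y * inner g v\<bar>) \<le> \<alpha> * phi y * inner g v" by (simp add: mult.assoc)
        have ap: "0 \<le> a powr p" by simp
        have eq: "(KK * rr powr p - G * rr - cdr * D powr (p - 1)) * t powr p
           = KK * rr powr p * t powr p - G * rr * t powr p - cdr * D powr (p - 1) * t powr p"
          by (simp add: algebra_simps)
        have eq2: "- cdr * \<alpha> * a powr (p - 1) = - (cdr * \<alpha> * a powr (p - 1))" by simp
        show ?thesis unfolding R_def using e1 e2 e3 ab ap eq eq2 by linarith
      qed
      finally show ?thesis using LD by linarith
    next
      case small: False
      show ?thesis
      proof (cases "u < del")
        case True
        have "u \<le> D" using True del_le by simp
        then have a00: "a = 0" using aS by simp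
        have "phi y = 0" using phi_eq a00 by simp
        have "uu y' \<le> D"
        proof -
          have "uu y' \<le> sqrt c2 * norm (y' - xstar)" unfolding uu_def by (rule u_le_norm)
          also have "norm (y' - xstar) \<le> (2 + C) * (del / sqrt c1) + rr"
          proof -
            have "y' - xstar = (y - xstar) + \<alpha> *\<^sub>R d + \<alpha> *\<^sub>R v" unfolding y'_def d_def by (simp add: algebra_simps)
            then have "norm (y' - xstar) \<le> norm (y - xstar) + norm (\<alpha> *\<^sub>R d) + norm (\<alpha> *\<^sub>R v)"
              by (metis order_trans[OF norm_triangle_ineq add_right_mono[OF norm_triangle_ineq]])
            then have "norm (y' - xstar) \<le> norm (y - xstar) + \<alpha> * norm d + \<alpha> * nv"
              unfolding nv_def using \<alpha>0 by simp
            also have "\<dots> \<le> norm (y - xstar) + 1 * ((C + 1) * norm (y - xstar)) + rr"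
              using \<alpha>0 \<alpha>1 d_bound[of y] small unfolding d_def by (intro add_mono mult_mono) auto
            also have "\<dots> = (2 + C) * norm (y - xstar) + rr" by (simp add: algebra_simps)
            also have "\<dots> \<le> (2 + C) * (del / sqrt c1) + rr"
            proof -
              have "norm (y - xstar) \<le> del / sqrt c1" using ne True c1_pos by (smt (verit) divide_right_mono real_sqrt_gt_zero)
              then show ?thesis using C_pos by (intro add_mono mult_left_mono) auto
            qed
            finally show ?thesis .
          qed
          then have "sqrt c2 * norm (y' - xstar) \<le> sqrt c2 * ((2 + C) * (del / sqrt c1) + rr)"
            using c2_pos by (intro mult_left_mono) auto
          also have "\<dots> = sqrt c2 * (2 + C) * del / sqrt c1 + sqrt c2 * rr" by (simp add: algebra_simps)
          also have "\<dots> \<le> D" using del_le2 rr_eq by linarith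
          finally show ?thesis .
        qed
        then have "zz y' = 0" unfolding zz_def by (rule clipz_small)
        then show ?thesis unfolding R_def using a00 \<open>phi y = 0\<close> KKt_nonneg p_gt by simp
      next
        case False
        then have ud: "del \<le> u" by simp
        then have up: "u > 0" using del_pos by simp
        define h where "h = - \<alpha> * eta * u / 2 + \<alpha> * inner g v / (2 * u) + L2 * \<alpha>\<^sup>2 * (norm (d + v))\<^sup>2 / (4 * u)"
        have "uu y' \<le> u + h"
          using step_u[where x=y and v=v and \<alpha>=\<alpha>] up \<alpha>0 unfolding h_def u_def uu_def y'_def g_def d_def
          by (simp add: algebra_simps)
        then have "uu y' - D \<le> a + h" using aS by simp
        then have "zz y' \<le> max 0 (a + h)" unfolding zz_def using clipz_le[of D "uu y'"] by simp
        then have "zz y' powr p \<le> max 0 (a + h) powr p" using z'0 p_gt by (intro powr_mono2) auto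
        also have "\<dots> \<le> a powr p + p * a powr (p - 1) * h + K0 * (a powr (p - 2) * h\<^sup>2 + \<bar>h\<bar> powr p)"
          unfolding K0_def using taylor_powr[OF a0 p_gt] by simp
        finally have L1: "zz y' powr p \<le> a powr p + p * a powr (p - 1) * h + K0 * (a powr (p - 2) * h\<^sup>2 + \<bar>h\<bar> powr p)" .
        define Q where "Q = (norm (d + v))\<^sup>2"
        have Q0: "0 \<le> Q" unfolding Q_def by simp
        have Qb: "Q \<le> 2 * Dd\<^sup>2 + 2 * nv\<^sup>2"
        proof -
          have "norm (d + v) \<le> norm d + nv" unfolding nv_def by (rule norm_triangle_ineq)
          then have "Q \<le> (norm d + nv)\<^sup>2" unfolding Q_def by (intro power_mono) auto
          also have "\<dots> \<le> 2 * (norm d)\<^sup>2 + 2 * nv\<^sup>2" by (rule sq_sum_le)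
          also have "(norm d)\<^sup>2 \<le> Dd\<^sup>2" using nd by (intro power_mono) auto
          finally show ?thesis by simp
        qed
        have vp: "nv\<^sup>2 \<le> 1 + nv powr p" using nv0 p_gt by (intro sq_le_powr) auto
        have Qb2: "Q \<le> (2 * Dd\<^sup>2 + 2) * (1 + nv powr p)"
        proof -
          have "Dd\<^sup>2 \<le> Dd\<^sup>2 * (1 + nv powr p)" using nvp by (simp add: mult_le_cancel_left1)
          then have "2 * Dd\<^sup>2 + 2 * nv\<^sup>2 \<le> 2 * (Dd\<^sup>2 * (1 + nv powr p)) + 2 * (1 + nv powr p)"
            using vp by (intro add_mono mult_left_mono) auto
          then show ?thesis using Qb by (simp add: algebra_simps)
        qed
        have anv: "\<alpha> * nv \<le> rr" using small by simp
        have anv0: "0 \<le> \<alpha> * nv" using \<alpha>0 nv0 by simp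
        have b1: "\<bar>- \<alpha> * eta * u / 2\<bar> \<le> \<alpha> * (eta * D)"
          using \<alpha>0 eta_pos u0 S by (simp add: abs_mult field_simps mult_left_mono)
        have b2: "\<bar>\<alpha> * inner g v / (2 * u)\<bar> \<le> \<alpha> * (sqrt (2 * L2) / 2 * nv)"
        proof -
          have "\<bar>inner g v\<bar> \<le> norm g * norm v" by (rule Cauchy_Schwarz_ineq2)
          also have "\<dots> \<le> sqrt (2 * L2) * u * nv" unfolding nv_def using ng by (intro mult_right_mono) auto
          finally have "\<bar>inner g v\<bar> \<le> sqrt (2 * L2) * u * nv" .
          then have "\<alpha> * \<bar>inner g v\<bar> / (2 * u) \<le> \<alpha> * (sqrt (2 * L2) * u * nv) / (2 * u)"
            using \<alpha>0 up by (intro divide_right_mono mult_left_mono) auto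
          also have "\<dots> = \<alpha> * (sqrt (2 * L2) / 2 * nv)" using up by (simp add: field_simps)
          finally show ?thesis using \<alpha>0 up by (simp add: abs_mult)
        qed
        have b3: "\<bar>L2 * \<alpha>\<^sup>2 * Q / (4 * u)\<bar> \<le> \<alpha> * (L2 * Dd\<^sup>2 / (2 * del) + L2 * rr / (2 * del) * nv)"
        proof -
          have "\<alpha>\<^sup>2 * Q \<le> \<alpha>\<^sup>2 * (2 * Dd\<^sup>2 + 2 * nv\<^sup>2)" using Qb by (intro mult_left_mono) auto
          also have "\<dots> = 2 * \<alpha>\<^sup>2 * Dd\<^sup>2 + 2 * (\<alpha> * nv)\<^sup>2" by (simp add: algebra_simps power_mult_distrib)
          also have "\<dots> \<le> 2 * \<alpha> * Dd\<^sup>2 + 2 * (rr * (\<alpha> * nv))"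
          proof -
            have "\<alpha>\<^sup>2 \<le> \<alpha>" using \<alpha>0 \<alpha>1 by (simp add: power2_eq_square mult_le_cancel_left1)
            then have "\<alpha>\<^sup>2 * Dd\<^sup>2 \<le> \<alpha> * Dd\<^sup>2" by (intro mult_right_mono) auto
            moreover have "(\<alpha> * nv)\<^sup>2 \<le> rr * (\<alpha> * nv)" unfolding power2_eq_square
              using anv anv0 by (intro mult_right_mono) auto
            ultimately show ?thesis by linarith
          qed
          finally have A1: "\<alpha>\<^sup>2 * Q \<le> 2 * \<alpha> * Dd\<^sup>2 + 2 * (rr * (\<alpha> * nv))" .
          have "\<bar>L2 * \<alpha>\<^sup>2 * Q / (4 * u)\<bar> = L2 * (\<alpha>\<^sup>2 * Q) / (4 * u)" using L2_pos up Q0 by (simp add: abs_mult)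
          also have "\<dots> \<le> L2 * (2 * \<alpha> * Dd\<^sup>2 + 2 * (rr * (\<alpha> * nv))) / (4 * del)"
            using A1 L2_pos del_pos ud Q0 \<alpha>0 anv0 rr_pos by (intro frac_le mult_left_mono mult_nonneg_nonneg) auto
          also have "\<dots> = \<alpha> * (L2 * Dd\<^sup>2 / (2 * del) + L2 * rr / (2 * del) * nv)"
            using del_pos by (simp add: field_simps del_pos[THEN less_imp_neq, symmetric])
          finally show ?thesis .
        qed
        have hsplit: "h = - \<alpha> * eta * u / 2 + \<alpha> * inner g v / (2 * u) + L2 * \<alpha>\<^sup>2 * Q / (4 * u)"
          unfolding h_def Q_def by simp
        have hb: "\<bar>h\<bar> \<le> \<alpha> * (K1 + K2 * nv)"
        proof -
          have "\<bar>h\<bar> \<le> \<bar>- \<alpha> * eta * u / 2\<bar> + \<bar>\<alpha> * inner g v / (2 * u)\<bar> + \<bar>L2 * \<alpha>\<^sup>2 * Q / (4 * u)\<bar>"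
            unfolding hsplit by linarith
          also have "\<dots> \<le> \<alpha> * (eta * D) + \<alpha> * (sqrt (2 * L2) / 2 * nv) + \<alpha> * (L2 * Dd\<^sup>2 / (2 * del) + L2 * rr / (2 * del) * nv)"
            using b1 b2 b3 by linarith
          also have "\<dots> = \<alpha> * (K1 + K2 * nv)" unfolding K1_def K2_def by (simp add: algebra_simps)
          finally show ?thesis .
        qed
        have K12: "0 \<le> K1 + K2 * nv" using K1_nonneg K2_nonneg nv0 by simp
        have ap2: "a powr (p - 1) = a * a powr (p - 2)"
        proof (cases "a = 0")
          case False
          have "a powr (p - 1) = a powr (1 + (p - 2))" by simp
          also have "\<dots> = a * a powr (p - 2)" using False a0 by (simp only: powr_add powr_one)
          finally show ?thesis .
        qed (use p_gt in simp)
        have T1: "p * a powr (p - 1) * h \<le> - cdr * \<alpha> * a powr (p - 1) + \<alpha> * phi y * inner g v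
             + \<alpha>\<^sup>2 * a powr (p - 2) * (p * D * L2 * (2 * Dd\<^sup>2 + 2) / (4 * del)) * (1 + nv powr p)"
        proof -
          have eqh: "p * a powr (p - 1) * h = - (p * eta / 2 * \<alpha> * (a powr (p - 1) * u)) + \<alpha> * phi y * inner g v
                + (p * L2 * \<alpha>\<^sup>2) * a powr (p - 1) * Q / (4 * u)"
            unfolding hsplit phi_eq using up by (simp add: field_simps up[THEN less_imp_neq, symmetric])
          have i1: "a powr (p - 1) * D \<le> a powr (p - 1) * u"
          proof (cases "a = 0")
            case False
            then have "u - D = a" using aS a0 by simp
            then show ?thesis using a0 by (intro mult_left_mono) auto
          qed simp
          have i1': "cdr * \<alpha> * a powr (p - 1) \<le> p * eta / 2 * \<alpha> * (a powr (p - 1) * u)"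
          proof -
            have "cdr * \<alpha> * a powr (p - 1) = p * eta / 2 * \<alpha> * (a powr (p - 1) * D)" unfolding cdr_def by simp
            also have "\<dots> \<le> p * eta / 2 * \<alpha> * (a powr (p - 1) * u)"
              using i1 p_gt eta_pos \<alpha>0 by (intro mult_left_mono[OF i1]) auto
            finally show ?thesis .
          qed
          have i3: "(p * L2 * \<alpha>\<^sup>2) * a powr (p - 1) * Q / (4 * u)
               \<le> (p * L2 * \<alpha>\<^sup>2) * (D * a powr (p - 2)) * ((2 * Dd\<^sup>2 + 2) * (1 + nv powr p)) / (4 * del)"
          proof -
            have "a powr (p - 1) \<le> D * a powr (p - 2)" unfolding ap2 using aD by (intro mult_right_mono) auto
            then have "(p * L2 * \<alpha>\<^sup>2) * a powr (p - 1) * Q \<le> (p * L2 * \<alpha>\<^sup>2) * (D * a powr (p - 2)) * ((2 * Dd\<^sup>2 + 2) * (1 + nv powr p))"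
              using Qb2 Q0 p_gt L2_pos D_pos by (intro mult_mono mult_nonneg_nonneg) auto
            then show ?thesis using del_pos ud by (intro frac_le mult_nonneg_nonneg) (use p_gt L2_pos D_pos nvp in auto)
          qed
          have i3': "(p * L2 * \<alpha>\<^sup>2) * (D * a powr (p - 2)) * ((2 * Dd\<^sup>2 + 2) * (1 + nv powr p)) / (4 * del)
             = \<alpha>\<^sup>2 * a powr (p - 2) * (p * D * L2 * (2 * Dd\<^sup>2 + 2) / (4 * del)) * (1 + nv powr p)"
            using del_pos by (simp add: field_simps del_pos[THEN less_imp_neq, symmetric])
          have eq2: "- cdr * \<alpha> * a powr (p - 1) = - (cdr * \<alpha> * a powr (p - 1))" by simp
          show ?thesis using eqh i1' i3 i3' eq2 by linarith
        qed
        have T2: "K0 * (a powr (p - 2) * h\<^sup>2) \<le> \<alpha>\<^sup>2 * a powr (p - 2) * (K0 * 2 * (K1\<^sup>2 + K2\<^sup>2)) * (1 + nv powr p)"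
        proof -
          have "h\<^sup>2 = \<bar>h\<bar>\<^sup>2" by simp
          also have "\<dots> \<le> (\<alpha> * (K1 + K2 * nv))\<^sup>2" by (rule power_mono[OF hb abs_ge_zero])
          also have "\<dots> = \<alpha>\<^sup>2 * (K1 + K2 * nv)\<^sup>2" by (simp add: power_mult_distrib)
          also have "\<dots> \<le> \<alpha>\<^sup>2 * (2 * (K1\<^sup>2 + K2\<^sup>2) * (1 + nv powr p))"
          proof -
            have "(K1 + K2 * nv)\<^sup>2 \<le> 2 * K1\<^sup>2 + 2 * (K2 * nv)\<^sup>2" by (rule sq_sum_le)
            also have "(K2 * nv)\<^sup>2 = K2\<^sup>2 * nv\<^sup>2" by (simp add: power_mult_distrib)
            also have "K2\<^sup>2 * nv\<^sup>2 \<le> K2\<^sup>2 * (1 + nv powr p)" using vp by (intro mult_left_mono) auto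
            also have "K1\<^sup>2 \<le> K1\<^sup>2 * (1 + nv powr p)" using nvp by (simp add: mult_le_cancel_left1)
            finally have "(K1 + K2 * nv)\<^sup>2 \<le> 2 * (K1\<^sup>2 * (1 + nv powr p)) + 2 * (K2\<^sup>2 * (1 + nv powr p))"
              by simp
            then show ?thesis by (intro mult_left_mono) (simp_all add: algebra_simps)
          qed
          finally have "h\<^sup>2 \<le> \<alpha>\<^sup>2 * (2 * (K1\<^sup>2 + K2\<^sup>2) * (1 + nv powr p))" .
          then have "K0 * (a powr (p - 2) * h\<^sup>2) \<le> K0 * (a powr (p - 2) * (\<alpha>\<^sup>2 * (2 * (K1\<^sup>2 + K2\<^sup>2) * (1 + nv powr p))))"
            using K0_pos by (intro mult_left_mono) auto
          then show ?thesis by (simp add: algebra_simps)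
        qed
        have T3: "K0 * \<bar>h\<bar> powr p \<le> \<alpha> powr p * (K0 * 2 powr p * (K1 powr p + K2 powr p)) * (1 + nv powr p)"
        proof -
          have "\<bar>h\<bar> powr p \<le> (\<alpha> * (K1 + K2 * nv)) powr p" using hb p_gt by (intro powr_mono2) auto
          also have "\<dots> = \<alpha> powr p * (K1 + K2 * nv) powr p" using \<alpha>0 K12 by (simp add: powr_mult)
          also have "(K1 + K2 * nv) powr p \<le> 2 powr p * (K1 powr p + (K2 * nv) powr p)"
            using K1_nonneg K2_nonneg nv0 p_gt by (intro sum_powr_le) auto
          also have "(K2 * nv) powr p = K2 powr p * nv powr p" using K2_nonneg nv0 by (simp add: powr_mult)
          also have "K1 powr p + K2 powr p * nv powr p \<le> (K1 powr p + K2 powr p) * (1 + nv powr p)"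
            by (simp add: algebra_simps)
          finally have "\<bar>h\<bar> powr p \<le> \<alpha> powr p * (2 powr p * ((K1 powr p + K2 powr p) * (1 + nv powr p)))"
            by (simp add: mult_left_mono)
          then have "K0 * \<bar>h\<bar> powr p \<le> K0 * (\<alpha> powr p * (2 powr p * ((K1 powr p + K2 powr p) * (1 + nv powr p))))"
            using K0_pos by (intro mult_left_mono) auto
          then show ?thesis by (simp add: algebra_simps)
        qed
        have F1: "\<alpha>\<^sup>2 * a powr (p - 2) * (p * D * L2 * (2 * Dd\<^sup>2 + 2) / (4 * del)) * (1 + nv powr p)
             + \<alpha>\<^sup>2 * a powr (p - 2) * (K0 * 2 * (K1\<^sup>2 + K2\<^sup>2)) * (1 + nv powr p)
             \<le> \<alpha>\<^sup>2 * a powr (p - 2) * KK * (1 + nv powr p)"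
        proof -
          have "\<alpha>\<^sup>2 * a powr (p - 2) * (p * D * L2 * (2 * Dd\<^sup>2 + 2) / (4 * del) + K0 * 2 * (K1\<^sup>2 + K2\<^sup>2)) * (1 + nv powr p)
             \<le> \<alpha>\<^sup>2 * a powr (p - 2) * KK * (1 + nv powr p)"
            using KK_ge1 nvp by (intro mult_right_mono mult_left_mono) auto
          then show ?thesis by (simp add: algebra_simps)
        qed
        have F2: "\<alpha> powr p * (K0 * 2 powr p * (K1 powr p + K2 powr p)) * (1 + nv powr p) \<le> \<alpha> powr p * KK * (1 + nv powr p)"
          using KK_ge2 nvp by (intro mult_right_mono mult_left_mono) auto
        have F3: "KK * (\<alpha>\<^sup>2 * a powr (p - 2) + \<alpha> powr p) * (1 + nv powr p)
             = \<alpha>\<^sup>2 * a powr (p - 2) * KK * (1 + nv powr p) + \<alpha> powr p * KK * (1 + nv powr p)"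
          by (simp add: algebra_simps)
        have F4: "K0 * (a powr (p - 2) * h\<^sup>2 + \<bar>h\<bar> powr p) = K0 * (a powr (p - 2) * h\<^sup>2) + K0 * \<bar>h\<bar> powr p"
          by (simp add: algebra_simps)
        show ?thesis unfolding R_def using L1 T1 T2 T3 F1 F2 F3 F4 by linarith
      qed
    qed
    have S': "uu y \<le> 2 * D" using S u_def by simp
    show ?thesis using main S' unfolding R_def y'_def a_def g_def nv_def by simp
  qed
qed

end

lemma final_bound:
  fixes M cdr a \<alpha> p :: real
  assumes M: "M > 0" and c: "cdr > 0" and a: "0 \<le> a" and \<alpha>: "0 < \<alpha>" and p: "2 < p"
  shows "M * \<alpha>\<^sup>2 * a powr (p - 2) \<le> cdr * \<alpha> * a powr (p - 1) + M * (M / cdr) powr (p - 2) * \<alpha> powr p"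
proof -
  have ap2: "a powr (p - 1) = a * a powr (p - 2)"
  proof (cases "a = 0")
    case False
    have "a powr (p - 1) = a powr (1 + (p - 2))" by simp
    also have "\<dots> = a * a powr (p - 2)" using False a by (simp only: powr_add powr_one)
    finally show ?thesis .
  qed (use p in simp)
  have t: "0 \<le> M * (M / cdr) powr (p - 2) * \<alpha> powr p" using M c by simp
  have t2: "0 \<le> cdr * \<alpha> * a powr (p - 1)" using c \<alpha> by simp
  show ?thesis
  proof (cases "a \<ge> (M / cdr) * \<alpha>")
    case True
    have "M * \<alpha>\<^sup>2 * a powr (p - 2) = cdr * \<alpha> * (((M / cdr) * \<alpha>) * a powr (p - 2))"
      using c by (simp add: power2_eq_square field_simps)
    also have "\<dots> \<le> cdr * \<alpha> * (a * a powr (p - 2))"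
      using True c \<alpha> by (intro mult_left_mono mult_right_mono) auto
    also have "\<dots> = cdr * \<alpha> * a powr (p - 1)" using ap2 by simp
    finally show ?thesis using t by linarith
  next
    case False
    have "a powr (p - 2) \<le> ((M / cdr) * \<alpha>) powr (p - 2)" using False a p by (intro powr_mono2) auto
    also have "\<dots> = (M / cdr) powr (p - 2) * \<alpha> powr (p - 2)" by (rule powr_mult)
    finally have "M * \<alpha>\<^sup>2 * a powr (p - 2) \<le> M * \<alpha>\<^sup>2 * ((M / cdr) powr (p - 2) * \<alpha> powr (p - 2))"
      using M by (intro mult_left_mono) auto
    also have "\<dots> = M * (M / cdr) powr (p - 2) * (\<alpha> powr 2 * \<alpha> powr (p - 2))"
      using \<alpha> by (simp add: powr_realpow[of _ 2, simplified] algebra_simps)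
    also have "\<alpha> powr 2 * \<alpha> powr (p - 2) = \<alpha> powr p" by (simp flip: powr_add)
    finally show ?thesis using t2 by linarith
  qed
qed

context sa begin

lemma Phi_cont: "continuous_on UNIV Phi"
proof -
  have "continuous (at y) Phi" for y
    using Phi_grad[of y] unfolding gderiv_def by (rule has_derivative_continuous)
  then show ?thesis by (simp add: continuous_at_imp_continuous_on)
qed

lemma Phi_meas[measurable]: "Phi \<in> borel_measurable borel"
  by (rule borel_measurable_continuous_onI[OF Phi_cont])

lemma H_cont: "continuous_on UNIV H"
proof -
  have "C-lipschitz_on UNIV H"
    by (rule lipschitz_onI) (use lipschitz C_pos in \<open>auto simp: dist_norm\<close>)
  then show ?thesis by (rule lipschitz_on_continuous_on)
qed

lemma H_meas[measurable]: "H \<in> borel_measurable borel"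
  by (rule borel_measurable_continuous_onI[OF H_cont])

lemma grad_lim:
  "(\<lambda>n. (Phi (y + (1 / real (Suc n)) *\<^sub>R i) - Phi y) / (1 / real (Suc n))) \<longlonglongrightarrow> inner (gradPhi y) i"
proof -
  have d1: "((\<lambda>t. y + t *\<^sub>R i) has_derivative (\<lambda>t. t *\<^sub>R i)) (at 0)"
    by (auto intro!: derivative_eq_intros)
  have d2: "(Phi has_derivative (\<lambda>h. inner h (gradPhi y))) (at (y + 0 *\<^sub>R i))"
    using Phi_grad[of y] unfolding gderiv_def by simp
  have "((\<lambda>t. Phi (y + t *\<^sub>R i)) has_derivative (\<lambda>t. inner (t *\<^sub>R i) (gradPhi y))) (at 0)"
    using has_derivative_compose[OF d1 d2] by (simp add: o_def)
  moreover have "(\<lambda>t. inner (t *\<^sub>R i) (gradPhi y)) = (*) (inner i (gradPhi y))" by (rule ext) (simp add: mult.commute)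
  ultimately have "((\<lambda>t. Phi (y + t *\<^sub>R i)) has_real_derivative inner i (gradPhi y)) (at 0)"
    unfolding has_field_derivative_def by simp
  then have L: "((\<lambda>h. (Phi (y + h *\<^sub>R i) - Phi y) / h) \<longlongrightarrow> inner i (gradPhi y)) (at 0)"
    unfolding DERIV_def by simp
  have S: "filterlim (\<lambda>n. 1 / real (Suc n)) (at 0) sequentially"
    unfolding filterlim_at using LIMSEQ_inverse_real_of_nat by (simp add: inverse_eq_divide)
  from filterlim_compose[OF L S] show ?thesis by (simp add: o_def inner_commute)
qed

lemma grad_meas[measurable]: "gradPhi \<in> borel_measurable borel"
proof -
  have "(\<lambda>y. inner (gradPhi y) i) \<in> borel_measurable borel" for i
  proof (rule borel_measurable_LIMSEQ_real[OF grad_lim])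
    fix n
    show "(\<lambda>y. (Phi (y + (1 / real (Suc n)) *\<^sub>R i) - Phi y) / (1 / real (Suc n))) \<in> borel_measurable borel"
      by measurable
  qed
  then show ?thesis by (subst borel_measurable_euclidean_space) auto
qed

lemma uu_meas[measurable]: "uu \<in> borel_measurable borel"
  unfolding uu_def by measurable
lemma zz_meas[measurable]: "zz \<in> borel_measurable borel"
  unfolding zz_def clipz_def by measurable
lemma phi_meas[measurable]: "phi \<in> borel_measurable borel"
  unfolding phi_def by measurable

lemma phig_bound: "\<bar>phi y * inner (gradPhi (y - xstar)) v\<bar> \<le> G * norm v"
proof (cases "uu y \<le> 2 * D")
  case False then show ?thesis unfolding phi_def using G_nonneg by simp
next
  case S: True
  define u where "u = uu y"
  define a where "a = zz y"
  define g where "g = gradPhi (y - xstar)"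
  have u0: "u \<ge> 0" unfolding u_def by (rule u_nonneg)
  have a0: "a \<ge> 0" unfolding a_def zz_def by (rule clipz_nonneg)
  have aD: "a \<le> D" unfolding a_def zz_def using D_pos by (intro clipz_leD) auto
  have ng: "norm g \<le> sqrt (2 * L2) * u"
  proof -
    have "(norm g)\<^sup>2 \<le> 2 * L2 * Phi (y - xstar)" unfolding g_def by (rule grad_bound)
    also have "Phi (y - xstar) = u\<^sup>2" unfolding u_def uu_def using Phi_nonneg by simp
    finally have "sqrt ((norm g)\<^sup>2) \<le> sqrt (2 * L2 * u\<^sup>2)" by (rule real_sqrt_le_mono)
    then show ?thesis using u0 L2_pos by (simp add: real_sqrt_mult)
  qed
  have phi_eq: "phi y = p * a powr (p - 1) / (2 * u)" unfolding phi_def a_def u_def using S by simp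
  have apD: "a powr (p - 1) \<le> D powr (p - 1)" using a0 aD p_gt by (intro powr_mono2) auto
  show ?thesis
  proof (cases "u = 0")
    case True then show ?thesis using phi_eq G_nonneg unfolding g_def by simp
  next
    case False
    then have up: "u > 0" using u0 by simp
    have "\<bar>phi y * inner g v\<bar> = p * a powr (p - 1) / (2 * u) * \<bar>inner g v\<bar>"
      using phi_eq p_gt up by (simp add: abs_mult)
    also have "\<dots> \<le> p * a powr (p - 1) / (2 * u) * (sqrt (2 * L2) * u * norm v)"
    proof -
      have "\<bar>inner g v\<bar> \<le> norm g * norm v" by (rule Cauchy_Schwarz_ineq2)
      also have "\<dots> \<le> sqrt (2 * L2) * u * norm v" using ng by (intro mult_right_mono) auto
      finally show ?thesis using p_gt up by (intro mult_left_mono) auto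
    qed
    also have "\<dots> = p * a powr (p - 1) * sqrt (2 * L2) * norm v / 2"
      using up by (simp add: field_simps up[THEN less_imp_neq, symmetric])
    also have "\<dots> \<le> p * D powr (p - 1) * sqrt (2 * L2) * norm v / 2"
      using apD p_gt L2_pos by (intro divide_right_mono mult_right_mono mult_left_mono) auto
    finally show ?thesis unfolding G_def g_def by (simp add: field_simps)
  qed
qed

end

lemma nat_filtration_space[simp]: "space (nat_filtration M x k) = space M"
  unfolding nat_filtration_def by (simp add: space_measure_of_conv)

lemma nat_filtration_sets:
  "sets (nat_filtration M x k) = sigma_sets (space M) {x i -` A \<inter> space M | i A. i \<le> k \<and> A \<in> sets borel}"
  unfolding nat_filtration_def by (subst sets_measure_of_conv) auto

lemma nat_filtration_subalg:
  assumes "\<And>i. x i \<in> borel_measurable M"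
  shows "subalgebra M (nat_filtration M x k)"
  unfolding subalgebra_def
proof
  show "sets (nat_filtration M x k) \<subseteq> sets M"
    unfolding nat_filtration_sets
    by (rule sets.sigma_sets_subset) (use assms in \<open>auto intro: measurable_sets\<close>)
qed simp

lemma nat_filtration_meas:
  fixes x :: "nat \<Rightarrow> 'm \<Rightarrow> 'v::topological_space"
  assumes "i \<le> k"
  shows "x i \<in> borel_measurable (nat_filtration M x k)"
proof (rule measurableI)
  fix A :: "'v set" assume "A \<in> sets borel"
  then show "x i -` A \<inter> space (nat_filtration M x k) \<in> sets (nat_filtration M x k)"
    unfolding nat_filtration_sets nat_filtration_space using assms
    by (intro sigma_sets.Basic) blast
qed simp

context sa begin

definition "Wb A B = A + B * (2 * D / sqrt c1) powr p"
definition "Mb A B = KK * (1 + Wb A B)"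
definition "bc A B = Mb A B * (Mb A B / cdr) powr (p - 2) + Mb A B"

lemma norm_S: "uu y \<le> 2 * D \<Longrightarrow> norm (y - xstar) \<le> 2 * D / sqrt c1"
proof -
  assume S: "uu y \<le> 2 * D"
  have "sqrt c1 * norm (y - xstar) \<le> 2 * D" using norm_le_u[of y] S unfolding uu_def by simp
  then show ?thesis using c1_pos by (simp add: field_simps)
qed

lemma Wb_ge: "A \<ge> 0 \<Longrightarrow> B \<ge> 0 \<Longrightarrow> uu y \<le> 2 * D \<Longrightarrow> A + B * norm (y - xstar) powr p \<le> Wb A B"
  unfolding Wb_def using norm_S[of y] p_gt by (intro add_left_mono mult_left_mono powr_mono2) auto

lemma Wb_nonneg: "A \<ge> 0 \<Longrightarrow> B \<ge> 0 \<Longrightarrow> Wb A B \<ge> 0"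
  unfolding Wb_def by simp

lemma Mb_pos: "A \<ge> 0 \<Longrightarrow> B \<ge> 0 \<Longrightarrow> Mb A B > 0"
  unfolding Mb_def using KK_pos Wb_nonneg[of A B] by (simp add: add_pos_nonneg)

lemma bc_pos: "A \<ge> 0 \<Longrightarrow> B \<ge> 0 \<Longrightarrow> bc A B > 0"
  unfolding bc_def using Mb_pos[of A B] cdr_pos by (simp add: add_nonneg_pos)

lemma det_final:
  assumes A: "A \<ge> 0" and B: "B \<ge> 0" and \<alpha>0: "0 < \<alpha>" and \<alpha>1: "\<alpha> \<le> 1"
  shows "zz y powr p + (if uu y \<le> 2 * D then - cdr * \<alpha> * zz y powr (p - 1) else 0)
     + (if uu y \<le> 2 * D then KK * (\<alpha>\<^sup>2 * zz y powr (p - 2) + \<alpha> powr p) else 0) * (1 + (A + B * norm (y - xstar) powr p))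
     \<le> zz y powr p + bc A B * \<alpha> powr p"
proof (cases "uu y \<le> 2 * D")
  case False then show ?thesis using bc_pos[OF A B] by simp
next
  case S: True
  define a where "a = zz y"
  have a0: "a \<ge> 0" unfolding a_def zz_def by (rule clipz_nonneg)
  have W: "1 + (A + B * norm (y - xstar) powr p) \<le> 1 + Wb A B" using Wb_ge[OF A B S] by simp
  have k0: "0 \<le> KK * (\<alpha>\<^sup>2 * a powr (p - 2) + \<alpha> powr p)" using KK_pos by simp
  have "KK * (\<alpha>\<^sup>2 * a powr (p - 2) + \<alpha> powr p) * (1 + (A + B * norm (y - xstar) powr p))
      \<le> KK * (\<alpha>\<^sup>2 * a powr (p - 2) + \<alpha> powr p) * (1 + Wb A B)"
    using W k0 by (rule mult_left_mono)
  also have "\<dots> = Mb A B * \<alpha>\<^sup>2 * a powr (p - 2) + Mb A B * \<alpha> powr p"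
    unfolding Mb_def by (simp add: algebra_simps)
  finally have e1: "KK * (\<alpha>\<^sup>2 * a powr (p - 2) + \<alpha> powr p) * (1 + (A + B * norm (y - xstar) powr p))
      \<le> Mb A B * \<alpha>\<^sup>2 * a powr (p - 2) + Mb A B * \<alpha> powr p" .
  have e2: "Mb A B * \<alpha>\<^sup>2 * a powr (p - 2) \<le> cdr * \<alpha> * a powr (p - 1) + Mb A B * (Mb A B / cdr) powr (p - 2) * \<alpha> powr p"
    using final_bound[OF Mb_pos[OF A B] cdr_pos a0 \<alpha>0 p_gt] .
  have e3: "bc A B * \<alpha> powr p = Mb A B * (Mb A B / cdr) powr (p - 2) * \<alpha> powr p + Mb A B * \<alpha> powr p"
    unfolding bc_def by (simp add: algebra_simps)
  have e4: "- cdr * \<alpha> * a powr (p - 1) = - (cdr * \<alpha> * a powr (p - 1))" by simp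
  show ?thesis using S e1 e2 e3 e4 unfolding a_def[symmetric] by simp
qed

end

context sa begin

lemma x_meas:
  fixes M :: "'b measure" and x w :: "nat \<Rightarrow> 'b \<Rightarrow> 'a" and \<alpha> :: "nat \<Rightarrow> real"
  assumes x0: "x 0 \<in> borel_measurable M"
    and wm: "\<forall>k. w k \<in> borel_measurable M"
    and rec: "\<forall>k. \<forall>\<omega>\<in>space M. x (Suc k) \<omega> = x k \<omega> + \<alpha> k *\<^sub>R (H (x k \<omega>) - x k \<omega> + w k \<omega>)"
  shows "x i \<in> borel_measurable M"
proof (induction i)
  case 0 then show ?case using x0 .
next
  case (Suc i)
  have [measurable]: "w i \<in> borel_measurable M" using wm by simp
  have [measurable]: "x i \<in> borel_measurable M" using Suc .
  have "(\<lambda>\<omega>. x i \<omega> + \<alpha> i *\<^sub>R (H (x i \<omega>) - x i \<omega> + w i \<omega>)) \<in> borel_measurable M" by measurable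
  then show ?case using rec by (subst measurable_cong[where g="\<lambda>\<omega>. x i \<omega> + \<alpha> i *\<^sub>R (H (x i \<omega>) - x i \<omega> + w i \<omega>)"]) auto
qed

end

context sa begin

lemma cond_step:
  fixes M :: "'b measure" and x w :: "nat \<Rightarrow> 'b \<Rightarrow> 'a" and \<alpha> :: "nat \<Rightarrow> real" and A B :: real and k :: nat
  assumes A: "A > 0" and B: "B \<ge> 0"
    and P: "prob_space M"
    and x0: "x 0 \<in> borel_measurable M"
    and wm: "\<forall>k. w k \<in> borel_measurable M"
    and \<alpha>pos: "\<forall>k. \<alpha> k > 0"
    and rec: "\<forall>k. \<forall>\<omega>\<in>space M. x (Suc k) \<omega> = x k \<omega> + \<alpha> k *\<^sub>R (H (x k \<omega>) - x k \<omega> + w k \<omega>)"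
    and wi: "\<forall>k. integrable M (w k)"
    and unb: "\<forall>k. \<forall>i\<in>Basis. AE \<omega> in M. real_cond_exp M (nat_filtration M x k) (\<lambda>\<omega>. inner (w k \<omega>) i) \<omega> = 0"
    and mom: "\<forall>k. AE \<omega> in M. nn_cond_exp M (nat_filtration M x k) (\<lambda>\<omega>. ennreal (norm (w k \<omega>) powr p)) \<omega>
              \<le> ennreal (A + B * norm (x k \<omega> - xstar) powr p)"
    and \<alpha>k: "\<alpha> k \<le> 1"
  shows "AE \<omega> in M. nn_cond_exp M (nat_filtration M x k)
                (\<lambda>\<omega>. ennreal (clipz D (sqrt (Phi (x (Suc k) \<omega> - xstar))) powr p)) \<omega>
              \<le> ennreal (clipz D (sqrt (Phi (x k \<omega> - xstar))) powr p + bc A B * \<alpha> k powr p)"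
proof -
  interpret prob_space M by (rule P)
  define F where "F = nat_filtration M x k"
  have xm[measurable]: "x i \<in> borel_measurable M" for i using x_meas[OF x0 wm rec] .
  have wkm[measurable]: "w k \<in> borel_measurable M" using wm by simp
  have sub: "subalgebra M F" unfolding F_def by (rule nat_filtration_subalg[OF xm])
  interpret S: finite_measure_subalgebra M F
    by (simp add: finite_measure_subalgebra_def finite_measure_subalgebra_axioms_def sub finite_measure_axioms)
  have xkF[measurable]: "x k \<in> borel_measurable F" unfolding F_def by (rule nat_filtration_meas) simp
  define a where "a = \<alpha> k"
  have a0: "0 < a" and a1: "a \<le> 1" using \<alpha>pos \<alpha>k unfolding a_def by auto
  define Y where "Y = (\<lambda>\<omega>. zz (x (Suc k) \<omega>) powr p)"
  define Z0 where "Z0 = (\<lambda>\<omega>. zz (x k \<omega>) powr p + (if uu (x k \<omega>) \<le> 2 * D then - cdr * a * zz (x k \<omega>) powr (p - 1) else 0))"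
  define \<kappa> where "\<kappa> = (\<lambda>\<omega>. if uu (x k \<omega>) \<le> 2 * D then KK * (a\<^sup>2 * zz (x k \<omega>) powr (p - 2) + a powr p) else 0)"
  define \<psi> where "\<psi> = (\<lambda>i \<omega>. a * phi (x k \<omega>) * inner (gradPhi (x k \<omega> - xstar)) i)"
  define Lt where "Lt = (\<lambda>i \<omega>. \<psi> i \<omega> * inner (w k \<omega>) i)"
  define Lin where "Lin = (\<lambda>\<omega>. \<Sum>i\<in>Basis. Lt i \<omega>)"
  define Q where "Q = (\<lambda>\<omega>. \<kappa> \<omega> + \<kappa> \<omega> * norm (w k \<omega>) powr p)"
  have Ym[measurable]: "Y \<in> borel_measurable M" unfolding Y_def by measurable
  have Z0F[measurable]: "Z0 \<in> borel_measurable F" unfolding Z0_def by measurable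
  have \<kappa>F[measurable]: "\<kappa> \<in> borel_measurable F" unfolding \<kappa>_def by measurable
  have \<psi>F[measurable]: "\<psi> i \<in> borel_measurable F" for i unfolding \<psi>_def by measurable
  have Z0M[measurable]: "Z0 \<in> borel_measurable M" by (rule measurable_from_subalg[OF sub Z0F])
  have \<kappa>M[measurable]: "\<kappa> \<in> borel_measurable M" by (rule measurable_from_subalg[OF sub \<kappa>F])
  have \<psi>M[measurable]: "\<psi> i \<in> borel_measurable M" for i by (rule measurable_from_subalg[OF sub \<psi>F])
  have LtM[measurable]: "Lt i \<in> borel_measurable M" for i unfolding Lt_def by measurable
  have LinM[measurable]: "Lin \<in> borel_measurable M" unfolding Lin_def by measurable
  have QM[measurable]: "Q \<in> borel_measurable M" unfolding Q_def by measurable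
  have pw: "Y \<omega> \<le> Z0 \<omega> + Lin \<omega> + Q \<omega>" if "\<omega> \<in> space M" for \<omega>
  proof -
    have "Y \<omega> = zz (x k \<omega> + a *\<^sub>R (H (x k \<omega>) - x k \<omega> + w k \<omega>)) powr p"
      unfolding Y_def a_def using rec that by simp
    also have "\<dots> \<le> zz (x k \<omega>) powr p + a * phi (x k \<omega>) * inner (gradPhi (x k \<omega> - xstar)) (w k \<omega>)
     + (if uu (x k \<omega>) \<le> 2 * D then - cdr * a * zz (x k \<omega>) powr (p - 1)
          + KK * (a\<^sup>2 * zz (x k \<omega>) powr (p - 2) + a powr p) * (1 + norm (w k \<omega>) powr p) else 0)"
      by (rule main_pw[OF a0 a1])
    also have "a * phi (x k \<omega>) * inner (gradPhi (x k \<omega> - xstar)) (w k \<omega>) = Lin \<omega>"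
    proof -
      have "inner (gradPhi (x k \<omega> - xstar)) (w k \<omega>) = (\<Sum>i\<in>Basis. inner (gradPhi (x k \<omega> - xstar)) i * inner (w k \<omega>) i)"
        by (rule euclidean_inner)
      then show ?thesis unfolding Lin_def Lt_def \<psi>_def by (simp add: sum_distrib_left mult.assoc)
    qed
    finally show ?thesis unfolding Z0_def Q_def \<kappa>_def by (auto simp: algebra_simps)
  qed
  have zz0: "0 \<le> zz y" for y unfolding zz_def by (rule clipz_nonneg)
  have zzD: "zz y \<le> D" for y unfolding zz_def using D_pos by (intro clipz_leD) auto
  have zzp: "zz y powr q \<le> D powr q" if "q \<ge> 0" for y q using zz0 zzD that by (intro powr_mono2) auto
  have Y0: "0 \<le> Y \<omega>" for \<omega> unfolding Y_def by simp
  have YD: "Y \<omega> \<le> D powr p" for \<omega> unfolding Y_def using zzp p_gt by simp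
  have \<kappa>0: "0 \<le> \<kappa> \<omega>" for \<omega> unfolding \<kappa>_def using KK_pos by simp
  have \<kappa>b: "\<kappa> \<omega> \<le> KK * (D powr (p - 2) + 1)" for \<omega>
  proof -
    have "a\<^sup>2 \<le> 1" using a0 a1 by (simp add: power_le_one)
    moreover have "zz (x k \<omega>) powr (p - 2) \<le> D powr (p - 2)" using zzp p_gt by simp
    ultimately have "a\<^sup>2 * zz (x k \<omega>) powr (p - 2) \<le> 1 * D powr (p - 2)"
      by (intro mult_mono) auto
    moreover have "a powr p \<le> 1" using a0 a1 p_gt by (intro powr_le1) auto
    ultimately have "KK * (a\<^sup>2 * zz (x k \<omega>) powr (p - 2) + a powr p) \<le> KK * (D powr (p - 2) + 1)"
      using KK_pos by (intro mult_left_mono) auto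
    then show ?thesis unfolding \<kappa>_def using KK_pos by (simp add: add_nonneg_nonneg)
  qed
  have Z0b: "\<bar>Z0 \<omega>\<bar> \<le> D powr p + cdr * D powr (p - 1)" for \<omega>
  proof -
    have f1: "cdr * a * zz (x k \<omega>) powr (p - 1) \<le> cdr * 1 * D powr (p - 1)"
      using cdr_pos a0 a1 zzp[of "p - 1"] p_gt by (intro mult_mono) auto
    have f2: "0 \<le> cdr * a * zz (x k \<omega>) powr (p - 1)" using cdr_pos a0 by simp
    have f3: "zz (x k \<omega>) powr p \<le> D powr p" using zzp p_gt by simp
    have f4: "0 \<le> zz (x k \<omega>) powr p" by simp
    have f5: "0 \<le> cdr * D powr (p - 1)" using cdr_pos by simp
    show ?thesis
    proof (cases "uu (x k \<omega>) \<le> 2 * D")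
      case True
      then have "Z0 \<omega> = zz (x k \<omega>) powr p - cdr * a * zz (x k \<omega>) powr (p - 1)" unfolding Z0_def by simp
      then show ?thesis using f1 f2 f3 f4 f5 unfolding abs_le_iff by (simp only: mult_1_right) linarith
    next
      case False
      then have "Z0 \<omega> = zz (x k \<omega>) powr p" unfolding Z0_def by simp
      then show ?thesis using f1 f2 f3 f4 f5 unfolding abs_le_iff by linarith
    qed
  qed
  have \<psi>b: "\<bar>\<psi> i \<omega>\<bar> \<le> G * norm i" for i \<omega>
  proof -
    have "\<bar>\<psi> i \<omega>\<bar> = a * \<bar>phi (x k \<omega>) * inner (gradPhi (x k \<omega> - xstar)) i\<bar>"
      unfolding \<psi>_def using a0 by (simp add: abs_mult)
    also have "\<dots> \<le> 1 * (G * norm i)" using a0 a1 phig_bound by (intro mult_mono) auto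
    finally show ?thesis by simp
  qed
  have iY: "integrable M Y"
    by (rule integrable_const_bound[where B="D powr p"]) (use Y0 YD in auto)
  have iZ0: "integrable M Z0"
    by (rule integrable_const_bound[where B="D powr p + cdr * D powr (p - 1)"]) (use Z0b in auto)
  have i\<kappa>: "integrable M \<kappa>"
    by (rule integrable_const_bound[where B="KK * (D powr (p - 2) + 1)"]) (use \<kappa>0 \<kappa>b in auto)
  have iLt: "integrable M (Lt i)" for i
  proof -
    have I1: "integrable M (\<lambda>\<omega>. (G * norm i) * inner (w k \<omega>) i)"
      using wi by (intro integrable_mult_right integrable_inner_left) auto
    have I2: "AE \<omega> in M. norm (Lt i \<omega>) \<le> norm ((G * norm i) * inner (w k \<omega>) i)"
    proof (rule AE_I2)
      fix \<omega>
      have "\<bar>\<psi> i \<omega>\<bar> * \<bar>inner (w k \<omega>) i\<bar> \<le> \<bar>G * norm i\<bar> * \<bar>inner (w k \<omega>) i\<bar>"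
        using \<psi>b[of i \<omega>] by (intro mult_right_mono) auto
      then show "norm (Lt i \<omega>) \<le> norm ((G * norm i) * inner (w k \<omega>) i)"
        unfolding Lt_def by (simp add: abs_mult)
    qed
    show ?thesis by (rule Bochner_Integration.integrable_bound[OF I1 LtM I2])
  qed
  have iLin: "integrable M Lin" unfolding Lin_def by (rule Bochner_Integration.integrable_sum[OF iLt])
  have iKW: "integrable M (\<lambda>\<omega>. \<kappa> \<omega> * norm (w k \<omega>) powr p)"
  proof (rule integrableI_nonneg)
    show "(\<lambda>\<omega>. \<kappa> \<omega> * norm (w k \<omega>) powr p) \<in> borel_measurable M" by measurable
    show "AE \<omega> in M. 0 \<le> \<kappa> \<omega> * norm (w k \<omega>) powr p" using \<kappa>0 by simp
    define Kc where "Kc = KK * (D powr (p - 2) + 1) * Wb A B"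
    have "(\<integral>\<^sup>+\<omega>. ennreal (\<kappa> \<omega> * norm (w k \<omega>) powr p) \<partial>M)
        = (\<integral>\<^sup>+\<omega>. ennreal (\<kappa> \<omega>) * ennreal (norm (w k \<omega>) powr p) \<partial>M)"
      using \<kappa>0 by (simp add: ennreal_mult)
    also have "\<dots> = (\<integral>\<^sup>+\<omega>. ennreal (\<kappa> \<omega>) * nn_cond_exp M F (\<lambda>\<omega>. ennreal (norm (w k \<omega>) powr p)) \<omega> \<partial>M)"
      by (rule S.nn_cond_exp_intg[symmetric]) measurable
    also have "\<dots> \<le> (\<integral>\<^sup>+\<omega>. ennreal (\<kappa> \<omega>) * ennreal (A + B * norm (x k \<omega> - xstar) powr p) \<partial>M)"
    proof (rule nn_integral_mono_AE)
      show "AE \<omega> in M. ennreal (\<kappa> \<omega>) * nn_cond_exp M F (\<lambda>\<omega>. ennreal (norm (w k \<omega>) powr p)) \<omega>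
          \<le> ennreal (\<kappa> \<omega>) * ennreal (A + B * norm (x k \<omega> - xstar) powr p)"
        using mom[rule_format, of k] unfolding F_def
        by (rule eventually_mono) (rule mult_left_mono, auto)
    qed
    also have "\<dots> \<le> (\<integral>\<^sup>+\<omega>. ennreal Kc \<partial>M)"
    proof (rule nn_integral_mono)
      fix \<omega>
      have "\<kappa> \<omega> * (A + B * norm (x k \<omega> - xstar) powr p) \<le> Kc"
      proof (cases "uu (x k \<omega>) \<le> 2 * D")
        case True
        have "\<kappa> \<omega> * (A + B * norm (x k \<omega> - xstar) powr p) \<le> (KK * (D powr (p - 2) + 1)) * Wb A B"
          using \<kappa>0 \<kappa>b Wb_ge[of A B "x k \<omega>"] A B True KK_pos by (intro mult_mono) (auto simp: add_nonneg_nonneg)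
        then show ?thesis unfolding Kc_def .
      next
        case False
        then show ?thesis unfolding \<kappa>_def Kc_def using KK_pos Wb_nonneg[of A B] A B by simp
      qed
      then show "ennreal (\<kappa> \<omega>) * ennreal (A + B * norm (x k \<omega> - xstar) powr p) \<le> ennreal Kc"
      proof -
        have nn: "0 \<le> A + B * norm (x k \<omega> - xstar) powr p" using A B by simp
        have "ennreal (\<kappa> \<omega>) * ennreal (A + B * norm (x k \<omega> - xstar) powr p)
            = ennreal (\<kappa> \<omega> * (A + B * norm (x k \<omega> - xstar) powr p))"
          using \<kappa>0[of \<omega>] nn by (rule ennreal_mult[symmetric])
        also have "\<dots> \<le> ennreal Kc" by (rule ennreal_leI) fact
        finally show ?thesis .
      qed
    qed
    also have "\<dots> < \<infinity>" using emeasure_space_1 by (simp add: ennreal_mult_less_top)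
    finally show "(\<integral>\<^sup>+\<omega>. ennreal (\<kappa> \<omega> * norm (w k \<omega>) powr p) \<partial>M) < \<infinity>" .
  qed
  have iQ: "integrable M Q" unfolding Q_def using i\<kappa> iKW by (rule Bochner_Integration.integrable_add)
  have iZL: "integrable M (\<lambda>\<omega>. Z0 \<omega> + Lin \<omega>)" using iZ0 iLin by (rule Bochner_Integration.integrable_add)
  have iR: "integrable M (\<lambda>\<omega>. Z0 \<omega> + Lin \<omega> + Q \<omega>)" using iZL iQ by (rule Bochner_Integration.integrable_add)
  have c1: "AE \<omega> in M. real_cond_exp M F Y \<omega> \<le> real_cond_exp M F (\<lambda>\<omega>. Z0 \<omega> + Lin \<omega> + Q \<omega>) \<omega>"
    by (rule S.real_cond_exp_mono[OF AE_I2[OF pw] iY iR])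
  have c2: "AE \<omega> in M. real_cond_exp M F (\<lambda>\<omega>. Z0 \<omega> + Lin \<omega> + Q \<omega>) \<omega>
      = real_cond_exp M F (\<lambda>\<omega>. Z0 \<omega> + Lin \<omega>) \<omega> + real_cond_exp M F Q \<omega>"
    by (rule S.real_cond_exp_add[OF iZL iQ])
  have c3: "AE \<omega> in M. real_cond_exp M F (\<lambda>\<omega>. Z0 \<omega> + Lin \<omega>) \<omega>
      = real_cond_exp M F Z0 \<omega> + real_cond_exp M F Lin \<omega>"
    by (rule S.real_cond_exp_add[OF iZ0 iLin])
  have c4: "AE \<omega> in M. real_cond_exp M F Z0 \<omega> = Z0 \<omega>"
    by (rule S.real_cond_exp_F_meas[OF iZ0 Z0F])
  have c5: "AE \<omega> in M. real_cond_exp M F Lin \<omega> = 0"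
  proof -
    have s1: "AE \<omega> in M. real_cond_exp M F Lin \<omega> = (\<Sum>i\<in>Basis. real_cond_exp M F (Lt i) \<omega>)"
      unfolding Lin_def by (rule S.real_cond_exp_sum[OF iLt])
    have s2: "\<forall>i\<in>Basis. AE \<omega> in M. real_cond_exp M F (Lt i) \<omega> = 0"
    proof
      fix i :: 'a assume i: "i \<in> Basis"
      have m: "AE \<omega> in M. real_cond_exp M F (\<lambda>\<omega>. \<psi> i \<omega> * inner (w k \<omega>) i) \<omega>
          = \<psi> i \<omega> * real_cond_exp M F (\<lambda>\<omega>. inner (w k \<omega>) i) \<omega>"
        by (rule S.real_cond_exp_mult) (use iLt[of i] in \<open>auto simp: Lt_def\<close>)
      have z: "AE \<omega> in M. real_cond_exp M F (\<lambda>\<omega>. inner (w k \<omega>) i) \<omega> = 0"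
        using unb i unfolding F_def by blast
      show "AE \<omega> in M. real_cond_exp M F (Lt i) \<omega> = 0"
        using m z unfolding Lt_def by eventually_elim simp
    qed
    have s3: "AE \<omega> in M. \<forall>i\<in>Basis. real_cond_exp M F (Lt i) \<omega> = 0"
      by (rule eventually_ball_finite[OF finite_Basis s2])
    show ?thesis using s1 s3 by eventually_elim simp
  qed
  have c6: "AE \<omega> in M. real_cond_exp M F Q \<omega> \<le> \<kappa> \<omega> * (1 + (A + B * norm (x k \<omega> - xstar) powr p))"
  proof -
    have q1: "AE \<omega> in M. real_cond_exp M F Q \<omega>
        = real_cond_exp M F \<kappa> \<omega> + real_cond_exp M F (\<lambda>\<omega>. \<kappa> \<omega> * norm (w k \<omega>) powr p) \<omega>"
      unfolding Q_def by (rule S.real_cond_exp_add[OF i\<kappa> iKW])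
    have q2: "AE \<omega> in M. real_cond_exp M F \<kappa> \<omega> = \<kappa> \<omega>"
      by (rule S.real_cond_exp_F_meas[OF i\<kappa> \<kappa>F])
    have q3: "AE \<omega> in M. real_cond_exp M F (\<lambda>\<omega>. \<kappa> \<omega> * norm (w k \<omega>) powr p) \<omega>
        = \<kappa> \<omega> * real_cond_exp M F (\<lambda>\<omega>. norm (w k \<omega>) powr p) \<omega>"
      by (rule S.real_cond_exp_mult[OF \<kappa>F _ iKW]) measurable
    have q4: "AE \<omega> in M. real_cond_exp M F (\<lambda>\<omega>. norm (w k \<omega>) powr p) \<omega> \<le> A + B * norm (x k \<omega> - xstar) powr p"
      using mom[rule_format, of k] unfolding F_def[symmetric]
    proof eventually_elim
      case (elim \<omega>)
      have "enn2real (nn_cond_exp M F (\<lambda>\<omega>. ennreal (norm (w k \<omega>) powr p)) \<omega>) \<le> A + B * norm (x k \<omega> - xstar) powr p"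
        by (rule enn2real_leI) (use A B elim in auto)
      moreover have "0 \<le> enn2real (nn_cond_exp M F (\<lambda>\<omega>. ennreal (- (norm (w k \<omega>) powr p))) \<omega>)" by simp
      ultimately show ?case unfolding real_cond_exp_def by linarith
    qed
    show ?thesis using q1 q2 q3 q4
    proof eventually_elim
      case (elim \<omega>)
      then have "\<kappa> \<omega> * real_cond_exp M F (\<lambda>\<omega>. norm (w k \<omega>) powr p) \<omega> \<le> \<kappa> \<omega> * (A + B * norm (x k \<omega> - xstar) powr p)"
        using \<kappa>0 by (intro mult_left_mono) auto
      then show ?case using elim by (simp add: algebra_simps)
    qed
  qed
  have c7: "AE \<omega> in M. nn_cond_exp M F (\<lambda>\<omega>. ennreal (Y \<omega>)) \<omega> = ennreal (real_cond_exp M F Y \<omega>)"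
  proof -
    have e0: "(\<lambda>\<omega>. ennreal (- Y \<omega>)) = (\<lambda>_. 0)" using Y0 by (intro ext) (simp add: ennreal_neg)
    have n0: "AE \<omega> in M. 0 = nn_cond_exp M F (\<lambda>_. 0) \<omega>" by (rule S.nn_cond_exp_F_meas) simp
    have n1: "AE \<omega> in M. nn_cond_exp M F (\<lambda>\<omega>. ennreal (Y \<omega>)) \<omega> \<le> nn_cond_exp M F (\<lambda>_. ennreal (D powr p)) \<omega>"
      by (rule S.nn_cond_exp_mono) (use YD in \<open>auto intro: ennreal_leI\<close>)
    have n2: "AE \<omega> in M. ennreal (D powr p) = nn_cond_exp M F (\<lambda>_. ennreal (D powr p)) \<omega>"
      by (rule S.nn_cond_exp_F_meas) simp
    show ?thesis using n0 n1 n2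
    proof eventually_elim
      case (elim \<omega>)
      have "nn_cond_exp M F (\<lambda>\<omega>. ennreal (Y \<omega>)) \<omega> < top"
        using elim by (metis ennreal_less_top order.strict_trans1)
      then show ?case unfolding real_cond_exp_def e0 using elim(1) by (simp flip: elim(1))
    qed
  qed
  have eqf: "(\<lambda>\<omega>. ennreal (clipz D (sqrt (Phi (x (Suc k) \<omega> - xstar))) powr p)) = (\<lambda>\<omega>. ennreal (Y \<omega>))"
    unfolding Y_def zz_def uu_def by simp
  show ?thesis unfolding eqf F_def[symmetric] using c1 c2 c3 c4 c5 c6 c7
  proof eventually_elim
    case (elim \<omega>)
    have "real_cond_exp M F Y \<omega> \<le> Z0 \<omega> + \<kappa> \<omega> * (1 + (A + B * norm (x k \<omega> - xstar) powr p))"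
      using elim by linarith
    also have "\<dots> \<le> zz (x k \<omega>) powr p + bc A B * a powr p"
      unfolding Z0_def \<kappa>_def by (rule det_final[OF _ B a0 a1]) (use A in simp)
    finally have "real_cond_exp M F Y \<omega> \<le> zz (x k \<omega>) powr p + bc A B * a powr p" .
    then show ?case unfolding elim(7) zz_def uu_def a_def by (rule ennreal_leI)
  qed
qed

end

theorem mainTheorem16:
  fixes H :: "'a::euclidean_space \<Rightarrow> 'a"
    and xstar :: 'a
    and Phi :: "'a \<Rightarrow> real"
    and gradPhi :: "'a \<Rightarrow> 'a"
    and eta c1 c2 L2 p A B C D :: real
  assumes p_gt: "p > 2"
    and fix_pt: "H xstar = xstar"
    and Phi_nonneg: "\<And>x. Phi x \<ge> 0"
    and Phi_grad: "\<And>x. GDERIV Phi x :> gradPhi x"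
    and consts_pos: "eta > 0" "c1 > 0" "c2 > 0" "L2 > 0"
    and drift: "\<And>x. inner (gradPhi (x - xstar)) (H x - x) \<le> - eta * Phi (x - xstar)"
    and smooth: "\<And>x y. Phi y \<le> Phi x + inner (gradPhi x) (y - x) + L2 / 2 * (norm (y - x))\<^sup>2"
    and sandwich: "\<And>x. c1 * (norm (x - xstar))\<^sup>2 \<le> Phi (x - xstar) \<and> Phi (x - xstar) \<le> c2 * (norm (x - xstar))\<^sup>2"
    and A_pos: "A > 0" and B_nonneg: "B \<ge> 0"
    and C_pos: "C > 0" and lipschitz: "\<And>x y. norm (H x - H y) \<le> C * norm (x - y)"
    and D_pos: "D > 0"
  shows "\<exists>abar > 0. \<exists>b4 > 0.
    \<forall>(M :: 'b measure) (x :: nat \<Rightarrow> 'b \<Rightarrow> 'a) (w :: nat \<Rightarrow> 'b \<Rightarrow> 'a) (\<alpha> :: nat \<Rightarrow> real).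
      ( prob_space M
      \<and> x 0 \<in> borel_measurable M
      \<and> (\<forall>k. w k \<in> borel_measurable M)
      \<and> (\<forall>k. \<alpha> k > 0)
      \<and> (\<forall>k. \<forall>\<omega>\<in>space M. x (Suc k) \<omega> = x k \<omega> + \<alpha> k *\<^sub>R (H (x k \<omega>) - x k \<omega> + w k \<omega>))
      \<and> (\<forall>k. integrable M (w k))
      \<and> (\<forall>k. \<forall>i\<in>Basis. AE \<omega> in M.
            real_cond_exp M (nat_filtration M x k) (\<lambda>\<omega>. inner (w k \<omega>) i) \<omega> = 0)
      \<and> (\<forall>k. AE \<omega> in M.
            nn_cond_exp M (nat_filtration M x k) (\<lambda>\<omega>. ennreal (norm (w k \<omega>) powr p)) \<omega>
              \<le> ennreal (A + B * norm (x k \<omega> - xstar) powr p)) )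
      \<longrightarrow> (\<forall>k. \<alpha> k \<le> abar \<longrightarrow>
            (AE \<omega> in M.
              nn_cond_exp M (nat_filtration M x k)
                (\<lambda>\<omega>. ennreal (clipz D (sqrt (Phi (x (Suc k) \<omega> - xstar))) powr p)) \<omega>
              \<le> ennreal (clipz D (sqrt (Phi (x k \<omega> - xstar))) powr p + b4 * \<alpha> k powr p)))"
proof -
  interpret sa H xstar Phi gradPhi eta c1 c2 L2 p C D
    by (rule sa.intro) (use assms in auto)
  have bp: "bc A B > 0" using A_pos B_nonneg by (intro bc_pos) auto
  show ?thesis
    apply (rule exI[where x=1])
    apply (rule conjI, simp)
    apply (rule exI[where x="bc A B"])
    apply (rule conjI, rule bp)
    apply (intro allI impI)
    apply (elim conjE)
    apply (rule cond_step[OF A_pos B_nonneg]; assumption)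
    done
qed

end
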